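(* Let $(N,\mathcal{M})$ be a matroid of rank $K\ge 1$ and $Z:2^N\to\mathbb{R}$ a monotone submodular function with $Z(\emptyset)=0$ and curvature $c$. Let $\Omega$ be an optimal basis, i.e. $\Omega\in\mathcal{M}$, $|\Omega|=K$ and $Z(\Omega)=\max\{Z(S):S\in\mathcal{M}\}$, and assume $Z(\Omega)>0$. Let $G=G^K$ be the output of any run of the GREEDY algorithm (with arbitrary tie-breaking), with discriminants $d_i$ and index $i_0$ as defined in the context, and let $d_{\min}=\min_{i<i_0} d_i$ (with $d_{\min}=\infty$ if there is no $i<i_0$). Then $$\frac{Z(G)}{Z(\Omega)}\;\ge\;\min\left(1,\ \frac{1}{c+\max_{i<i_0}\frac{1}{d_i}}\right)=\min\left(1,\ \frac{1}{c+\frac{1}{d_{\min}}}\right),$$ with the conventions $1/\infty=0$ and $1/0=\infty$ (so the right-hand side is $1$ when $c+1/d_{\min}=0$).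
   Context: A matroid $(N,\mathcal{M})$ on a finite ground set $N$ is a family $\mathcal{M}\subseteq 2^N$ of "independent sets" with $\emptyset\in\mathcal{M}$, closed under taking subsets, and satisfying augmentation: if $S,T\in\mathcal{M}$ and $|T|>|S|$ then there is $x\in T\setminus S$ with $S\cup\{x\}\in\mathcal{M}$. Its rank $K$ is the maximum cardinality of an independent set; a basis is an independent set of cardinality $K$. For $S\subseteq N$ and $q\in N$, $\rho_q(S)=Z(S\cup\{q\})-Z(S)$. $Z$ is monotone if $Z(S)\le Z(T)$ for $S\subseteq T$, and submodular if $\rho_x(T)\le\rho_x(S)$ whenever $S\subseteq T\subseteq N$, $x\notin T$. The curvature of $Z$ is $c=1-\min\{\rho_j(S)/\rho_j(\emptyset): S\subseteq N,\ j\in N\setminus S,\ \rho_j(\emptyset)>0\}$. For $S\subseteq N$, $S_\bot=\{j\in N\setminus S: S\cup\{j\}\in\mathcal{M}\}$. GREEDY algorithm: set $G^0=\emptyset$; for $i=1,\dots,K$, choose $g_i\in\arg\max\{\rho_q(G^{i-1}): q\in G^{i-1}_\bot\}$ (ties broken arbitrarily) and set $G^i=G^{i-1}\cup\{g_i\}$; output $G=G^K$. Write $\rho_i=\rho_{g_i}(G^{i-1})$. Discriminant at iteration $i$: $d_i=\rho_{g_i}(G^{i-1})/\max\{\rho_{g'}(G^{i-1}): g'\in G^{i-1}_\bot,\ g'\neq g_i\}$, with $d_i=\infty$ if that maximum is $0$. $i_0=\min\{i\in\{1,\dots,K\}: |G^{i-1}_\bot|=K-i+1\}$ (this set is nonempty,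 since $|G^{K-1}_\bot|\ge 1$ and any larger value would allow independent sets of size $K+1$... in any case set $i_0=K+1$ if it is empty). *)

theory Defs
  imports Complex_Main "HOL-Library.Extended_Real"
begin

definition matroid :: "'a set \<Rightarrow> 'a set set \<Rightarrow> bool" where
  "matroid N M \<longleftrightarrow> finite N \<and> M \<subseteq> Pow N \<and> {} \<in> M
     \<and> (\<forall>S T. T \<in> M \<and> S \<subseteq> T \<longrightarrow> S \<in> M)
     \<and> (\<forall>S T. S \<in> M \<and> T \<in> M \<and> card T > card S \<longrightarrow> (\<exists>x\<in>T - S. insert x S \<in> M))"

definition matroid_rank :: "'a set set \<Rightarrow> nat" where
  "matroid_rank M = Max (card ` M)"

definition rho :: "('a set \<Rightarrow> real) \<Rightarrow> 'a \<Rightarrow> 'a set \<Rightarrow> real" where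
  "rho Z q S = Z (S \<union> {q}) - Z S"

definition monotone_fn :: "'a set \<Rightarrow> ('a set \<Rightarrow> real) \<Rightarrow> bool" where
  "monotone_fn N Z \<longleftrightarrow> (\<forall>S T. S \<subseteq> T \<and> T \<subseteq> N \<longrightarrow> Z S \<le> Z T)"

definition submodular_fn :: "'a set \<Rightarrow> ('a set \<Rightarrow> real) \<Rightarrow> bool" where
  "submodular_fn N Z \<longleftrightarrow>
     (\<forall>S T x. S \<subseteq> T \<and> T \<subseteq> N \<and> x \<in> N \<and> x \<notin> T \<longrightarrow> rho Z x T \<le> rho Z x S)"

definition curvature :: "'a set \<Rightarrow> ('a set \<Rightarrow> real) \<Rightarrow> real" where
  "curvature N Z = 1 - Min {rho Z j S / rho Z j {} | S j. S \<subseteq> N \<and> j \<in> N - S \<and> rho Z j {} > 0}"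

definition perp :: "'a set \<Rightarrow> 'a set set \<Rightarrow> 'a set \<Rightarrow> 'a set" where
  "perp N M S = {j \<in> N - S. S \<union> {j} \<in> M}"

definition Gset :: "(nat \<Rightarrow> 'a) \<Rightarrow> nat \<Rightarrow> 'a set" where
  "Gset g i = g ` {1..i}"

definition greedy_run :: "'a set \<Rightarrow> 'a set set \<Rightarrow> ('a set \<Rightarrow> real) \<Rightarrow> nat \<Rightarrow> (nat \<Rightarrow> 'a) \<Rightarrow> bool" where
  "greedy_run N M Z K g \<longleftrightarrow>
     (\<forall>i\<in>{1..K}. g i \<in> perp N M (Gset g (i - 1))
        \<and> (\<forall>q\<in>perp N M (Gset g (i - 1)). rho Z q (Gset g (i - 1)) \<le> rho Z (g i) (Gset g (i - 1))))"

definition discriminant :: "'a set \<Rightarrow> 'a set set \<Rightarrow> ('a set \<Rightarrow> real) \<Rightarrow> (nat \<Rightarrow> 'a) \<Rightarrow> nat \<Rightarrow> ereal" where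
  "discriminant N M Z g i =
     (let S = Gset g (i - 1);
          m = Max {rho Z g' S | g'. g' \<in> perp N M S \<and> g' \<noteq> g i}
      in if m = 0 then \<infinity> else ereal (rho Z (g i) S / m))"

definition i_zero :: "'a set \<Rightarrow> 'a set set \<Rightarrow> nat \<Rightarrow> (nat \<Rightarrow> 'a) \<Rightarrow> nat" where
  "i_zero N M K g =
     (if \<exists>i\<in>{1..K}. card (perp N M (Gset g (i - 1))) = K - i + 1
      then LEAST i. i \<in> {1..K} \<and> card (perp N M (Gset g (i - 1))) = K - i + 1
      else K + 1)"

text \<open>max over i < i_0 of 1/d_i, with the empty maximum being 0 (i.e. d_min = \<infinity>).\<close>
definition max_inv_disc :: "'a set \<Rightarrow> 'a set set \<Rightarrow> ('a set \<Rightarrow> real) \<Rightarrow> nat \<Rightarrow> (nat \<Rightarrow> 'a) \<Rightarrow> ereal" where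
  "max_inv_disc N M Z K g =
     (if i_zero N M K g \<le> 1 then 0
      else Max ((\<lambda>i. inverse (discriminant N M Z g i)) ` {1..<i_zero N M K g}))"

end

theory Submission
  imports Defs
begin

locale gr =
  fixes N :: "'a set" and M :: "'a set set" and Z :: "'a set \<Rightarrow> real" and K :: nat and g :: "nat \<Rightarrow> 'a"
  assumes mat: "matroid N M" and mono: "monotone_fn N Z" and sub: "submodular_fn N Z"
    and Z0: "Z {} = 0" and grr: "greedy_run N M Z K g"
begin

lemma finN: "finite N" using mat by (simp add: matroid_def)
lemma MPow: "S \<in> M \<Longrightarrow> S \<subseteq> N" using mat by (auto simp: matroid_def)
lemma down: "T \<in> M \<Longrightarrow> S \<subseteq> T \<Longrightarrow> S \<in> M" using mat unfolding matroid_def by blast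
lemma aug: "S \<in> M \<Longrightarrow> T \<in> M \<Longrightarrow> card T > card S \<Longrightarrow> \<exists>x\<in>T - S. insert x S \<in> M"
  using mat unfolding matroid_def by blast

lemma rho_nonneg: "S \<subseteq> N \<Longrightarrow> x \<in> N \<Longrightarrow> rho Z x S \<ge> 0"
proof -
  assume a: "S \<subseteq> N" "x \<in> N"
  have "S \<subseteq> S \<union> {x}" "S \<union> {x} \<subseteq> N" using a by auto
  then show ?thesis using mono unfolding monotone_fn_def rho_def by fastforce
qed

lemma rho_sub: "S \<subseteq> T \<Longrightarrow> T \<subseteq> N \<Longrightarrow> x \<in> N \<Longrightarrow> x \<notin> T \<Longrightarrow> rho Z x T \<le> rho Z x S"
  using sub unfolding submodular_fn_def by blast

lemma Gset_0: "Gset g 0 = {}" by (simp add: Gset_def)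
lemma Gset_Suc: "Gset g (Suc i) = insert (g (Suc i)) (Gset g i)"
  by (simp add: Gset_def atLeastAtMostSuc_conv image_insert)

lemma step_perp: "i \<in> {1..K} \<Longrightarrow> g i \<in> perp N M (Gset g (i-1))"
  using grr by (simp add: greedy_run_def)
lemma step_max: "i \<in> {1..K} \<Longrightarrow> q \<in> perp N M (Gset g (i-1)) \<Longrightarrow>
   rho Z q (Gset g (i-1)) \<le> rho Z (g i) (Gset g (i-1))"
  using grr by (simp add: greedy_run_def)

lemma G_in_M: "i \<le> K \<Longrightarrow> Gset g i \<in> M"
proof (induction i)
  case 0 then show ?case using mat by (simp add: Gset_0 matroid_def)
next
  case (Suc i)
  have "g (Suc i) \<in> perp N M (Gset g i)" using step_perp[of "Suc i"] Suc.prems by simp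
  then show ?case by (simp add: perp_def Gset_Suc)
qed

lemma G_sub_N: "i \<le> K \<Longrightarrow> Gset g i \<subseteq> N" using G_in_M MPow by blast

lemma g_notin: "i \<in> {1..K} \<Longrightarrow> g i \<notin> Gset g (i-1)"
  using step_perp[of i] by (simp add: perp_def)
lemma g_inN: "i \<in> {1..K} \<Longrightarrow> g i \<in> N"
  using step_perp[of i] by (simp add: perp_def)

lemma Gset_mono: "i \<le> j \<Longrightarrow> Gset g i \<subseteq> Gset g j"
  by (auto simp: Gset_def)

lemma inj_g: "inj_on g {1..K}"
proof (rule inj_onI)
  have *: "g i \<noteq> g j" if "i < j" "i \<in> {1..K}" "j \<in> {1..K}" for i j
  proof -
    have "g i \<in> Gset g (j-1)" using that by (auto simp: Gset_def)
    then show ?thesis using g_notin[of j] that by auto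
  qed
  fix i j assume "i \<in> {1..K}" "j \<in> {1..K}" "g i = g j"
  then show "i = j" using *[of i j] *[of j i] by (metis linorder_neqE_nat)
qed

lemma card_G: "i \<le> K \<Longrightarrow> card (Gset g i) = i"
  unfolding Gset_def by (subst card_image) (auto intro: inj_on_subset[OF inj_g])

definition r where "r j = rho Z (g j) (Gset g (j-1))"

lemma r_nonneg: "j \<in> {1..K} \<Longrightarrow> r j \<ge> 0"
  proof -
  assume a: "j \<in> {1..K}"
  have "Gset g (j-1) \<subseteq> N" using a by (intro G_sub_N) auto
  then show ?thesis unfolding r_def using a g_inN[of j] by (intro rho_nonneg) auto
qed

lemma telescope: "i \<le> K \<Longrightarrow> Z (Gset g i) = (\<Sum>j=1..i. r j)"
proof (induction i)
  case 0 then show ?case by (simp add: Gset_0 Z0)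
next
  case (Suc i)
  then show ?case by (simp add: r_def rho_def Gset_Suc)
qed

lemma nopos_le0:
  assumes "\<forall>x\<in>N. rho Z x {} \<le> 0" "finite S" "S \<subseteq> N"
  shows "Z S \<le> 0"
  using assms(2,3)
proof (induction S rule: finite_induct)
  case empty then show ?case by (simp add: Z0)
next
  case (insert x S)
  have "rho Z x S \<le> rho Z x {}" using insert by (intro rho_sub) auto
  moreover have "rho Z x {} \<le> 0" using assms(1) insert by auto
  ultimately show ?case using insert by (simp add: rho_def)
qed

lemma curv:
  assumes ex: "\<exists>j\<in>N. rho Z j {} > 0"
  shows "1 - curvature N Z \<ge> 0"
    and "S \<subseteq> N \<Longrightarrow> j \<in> N - S \<Longrightarrow> rho Z j S \<ge> (1 - curvature N Z) * rho Z j {}"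
proof -
  define Q where "Q = {rho Z j S / rho Z j {} | S j. S \<subseteq> N \<and> j \<in> N - S \<and> rho Z j {} > 0}"
  have c: "1 - curvature N Z = Min Q" unfolding curvature_def Q_def by simp
  have "Q \<subseteq> (\<lambda>(S,j). rho Z j S / rho Z j {}) ` (Pow N \<times> N)" unfolding Q_def by auto
  then have fQ: "finite Q" using finN by (meson finite_Pow_iff finite_SigmaI finite_imageI finite_subset)
  obtain j0 where "j0 \<in> N" "rho Z j0 {} > 0" using ex by auto
  then have "rho Z j0 {} / rho Z j0 {} \<in> Q" unfolding Q_def by force
  then have ne: "Q \<noteq> {}" by auto
  have "\<forall>q\<in>Q. q \<ge> 0" unfolding Q_def using rho_nonneg by fastforce
  then show "1 - curvature N Z \<ge> 0" using c fQ ne by simp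
  assume a: "S \<subseteq> N" "j \<in> N - S"
  show "rho Z j S \<ge> (1 - curvature N Z) * rho Z j {}"
  proof (cases "rho Z j {} > 0")
    case True
    then have "rho Z j S / rho Z j {} \<in> Q" unfolding Q_def using a by blast
    then have "Min Q \<le> rho Z j S / rho Z j {}" using fQ by simp
    then show ?thesis using c True by (simp add: pos_le_divide_eq)
  next
    case False
    then have "rho Z j {} = 0" using rho_nonneg[of "{}" j] a by auto
    then show ?thesis using rho_nonneg[of S j] a by simp
  qed
qed

lemma order_ex:
  assumes "\<Omega> \<subseteq> N"
  shows "i \<le> K \<Longrightarrow> T \<in> M \<Longrightarrow> T \<subseteq> \<Omega> \<Longrightarrow> card T = i \<Longrightarrow> finite T \<Longrightarrow>
    (\<forall>j\<in>{1..i}. g j \<in> \<Omega> \<longrightarrow> g j \<in> T) \<Longrightarrow>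
    \<exists>h. h ` {1..i} = T \<and> (\<forall>j\<in>{1..i}. (g j \<in> \<Omega> \<longrightarrow> h j = g j)
          \<and> (g j \<notin> \<Omega> \<longrightarrow> h j \<in> perp N M (Gset g (j-1))))"
proof (induction i arbitrary: T)
  case 0 then show ?case by auto
next
  case (Suc i)
  have gS: "Suc i \<in> {1..K}" using Suc.prems by auto
  obtain x where x: "x \<in> T" "g (Suc i) \<in> \<Omega> \<longrightarrow> x = g (Suc i)"
     "g (Suc i) \<notin> \<Omega> \<longrightarrow> x \<in> perp N M (Gset g i)"
  proof (cases "g (Suc i) \<in> \<Omega>")
    case True
    then show ?thesis using that Suc.prems(6) by auto
  next
    case False
    have "Gset g i \<in> M" using G_in_M Suc.prems by simp
    moreover have "card (Gset g i) < card T" using card_G[of i] Suc.prems by simp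
    ultimately obtain y where "y \<in> T - Gset g i" "insert y (Gset g i) \<in> M"
      using aug Suc.prems(2) by blast
    moreover then have "y \<in> N" using Suc.prems assms by auto
    ultimately have "y \<in> perp N M (Gset g i)" by (simp add: perp_def)
    then show ?thesis using that False \<open>y \<in> T - Gset g i\<close> by auto
  qed
  have xG: "x \<notin> Gset g i"
    using x g_notin[OF gS] by (cases "g (Suc i) \<in> \<Omega>") (auto simp: perp_def)
  define T' where "T' = T - {x}"
  have "\<forall>j\<in>{1..i}. g j \<in> \<Omega> \<longrightarrow> g j \<in> T'"
  proof (intro ballI impI)
    fix j assume j: "j \<in> {1..i}" "g j \<in> \<Omega>"
    then have "g j \<in> Gset g i" by (auto simp: Gset_def)
    then show "g j \<in> T'" using j Suc.prems(6) xG unfolding T'_def by auto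
  qed
  moreover have "T' \<in> M" using down Suc.prems unfolding T'_def by blast
  ultimately obtain h where h: "h ` {1..i} = T'" "\<forall>j\<in>{1..i}. (g j \<in> \<Omega> \<longrightarrow> h j = g j)
          \<and> (g j \<notin> \<Omega> \<longrightarrow> h j \<in> perp N M (Gset g (j-1)))"
    using Suc.IH[of T'] Suc.prems x unfolding T'_def by auto
  define h2 where "h2 = h(Suc i := x)"
  have "h2 ` {1..Suc i} = T"
  proof -
    have "{1..Suc i} = insert (Suc i) {1..i}" by auto
    moreover have "h2 ` {1..i} = h ` {1..i}" unfolding h2_def by auto
    moreover have "h2 (Suc i) = x" unfolding h2_def by simp
    ultimately have "h2 ` {1..Suc i} = insert x (T - {x})" using h(1) unfolding T'_def by simp
    then show ?thesis using x(1) by auto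
  qed
  moreover have "\<forall>j\<in>{1..Suc i}. (g j \<in> \<Omega> \<longrightarrow> h2 j = g j)
          \<and> (g j \<notin> \<Omega> \<longrightarrow> h2 j \<in> perp N M (Gset g (j-1)))"
    using h(2) x unfolding h2_def by (auto simp: le_Suc_eq)
  ultimately show ?case by blast
qed

lemma lower:
  assumes "\<Omega> \<subseteq> N" "\<exists>j\<in>N. rho Z j {} > 0"
  shows "i \<le> K \<Longrightarrow> Z (\<Omega> \<union> Gset g i) \<ge> Z \<Omega> + (1 - curvature N Z) * (\<Sum>j\<in>{j\<in>{1..i}. g j \<notin> \<Omega>}. r j)"
proof (induction i)
  case 0 then show ?case by (simp add: Gset_0)
next
  case (Suc i)
  have gS: "Suc i \<in> {1..K}" using Suc.prems by auto
  have IH: "Z \<Omega> + (1 - curvature N Z) * (\<Sum>j\<in>{j\<in>{1..i}. g j \<notin> \<Omega>}. r j) \<le> Z (\<Omega> \<union> Gset g i)"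
    using Suc by simp
  show ?case
  proof (cases "g (Suc i) \<in> \<Omega>")
    case True
    then have "{j\<in>{1..Suc i}. g j \<notin> \<Omega>} = {j\<in>{1..i}. g j \<notin> \<Omega>}" by (auto simp: le_Suc_eq)
    moreover have "\<Omega> \<union> Gset g (Suc i) = \<Omega> \<union> Gset g i" using True by (auto simp: Gset_Suc)
    ultimately show ?thesis using IH by simp
  next
    case False
    then have e: "{j\<in>{1..Suc i}. g j \<notin> \<Omega>} = insert (Suc i) {j\<in>{1..i}. g j \<notin> \<Omega>}" by (auto simp: le_Suc_eq)
    have GN: "Gset g i \<subseteq> N" using G_sub_N Suc.prems by simp
    have gn: "g (Suc i) \<notin> \<Omega> \<union> Gset g i" using False g_notin[OF gS] by simp
    have "rho Z (g (Suc i)) (\<Omega> \<union> Gset g i) \<ge> (1 - curvature N Z) * rho Z (g (Suc i)) {}"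
      using curv(2)[OF assms(2), of "\<Omega> \<union> Gset g i" "g (Suc i)"] GN assms(1) gn g_inN[OF gS] by auto
    moreover have "rho Z (g (Suc i)) {} \<ge> r (Suc i)"
      unfolding r_def using rho_sub[of "{}" "Gset g i" "g (Suc i)"] GN g_inN[OF gS] g_notin[OF gS] by simp
    moreover have "1 - curvature N Z \<ge> 0" using curv(1)[OF assms(2)] .
    ultimately have "rho Z (g (Suc i)) (\<Omega> \<union> Gset g i) \<ge> (1 - curvature N Z) * r (Suc i)"
      by (meson mult_left_mono order_trans)
    moreover have "Z (\<Omega> \<union> Gset g (Suc i)) = Z (\<Omega> \<union> Gset g i) + rho Z (g (Suc i)) (\<Omega> \<union> Gset g i)"
      by (simp add: rho_def Gset_Suc Un_commute insert_commute)
    ultimately show ?thesis using IH e by (simp add: distrib_left)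
  qed
qed

lemma upper:
  assumes h: "\<forall>j\<in>{1..K}. h j \<in> Gset g K \<or> h j \<in> perp N M (Gset g (j-1))"
  shows "i \<le> K \<Longrightarrow> Z (Gset g K \<union> h ` {1..i}) \<le> Z (Gset g K) +
     (\<Sum>j\<in>{j\<in>{1..i}. h j \<notin> Gset g K}. rho Z (h j) (Gset g (j-1)))"
proof (induction i)
  case 0 then show ?case by simp
next
  case (Suc i)
  have IH: "Z (Gset g K \<union> h ` {1..i}) \<le> Z (Gset g K) +
     (\<Sum>j\<in>{j\<in>{1..i}. h j \<notin> Gset g K}. rho Z (h j) (Gset g (j-1)))" using Suc by simp
  have "{1..Suc i} = insert (Suc i) {1..i}" by auto
  then have im: "Gset g K \<union> h ` {1..Suc i} = insert (h (Suc i)) (Gset g K \<union> h ` {1..i})"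
    by auto
  show ?case
  proof (cases "h (Suc i) \<in> Gset g K")
    case True
    then have "{j\<in>{1..Suc i}. h j \<notin> Gset g K} = {j\<in>{1..i}. h j \<notin> Gset g K}" by (auto simp: le_Suc_eq)
    moreover have "Gset g K \<union> h ` {1..Suc i} = Gset g K \<union> h ` {1..i}" using im True by auto
    ultimately show ?thesis using IH by simp
  next
    case False
    then have e: "{j\<in>{1..Suc i}. h j \<notin> Gset g K} = insert (Suc i) {j\<in>{1..i}. h j \<notin> Gset g K}" by (auto simp: le_Suc_eq)
    have p: "h (Suc i) \<in> perp N M (Gset g i)" using h Suc.prems False by force
    then have oN: "h (Suc i) \<in> N" by (simp add: perp_def)
    have GN: "Gset g i \<subseteq> N" using G_sub_N Suc.prems by simp
    have VN: "Gset g K \<union> h ` {1..i} \<subseteq> N"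
    proof -
      have "h j \<in> N" if "j \<in> {1..i}" for j
        using h that Suc.prems G_sub_N[of K] by (force simp: perp_def)
      then show ?thesis using G_sub_N[of K] by auto
    qed
    have inc: "Z (Gset g K \<union> h ` {1..Suc i}) - Z (Gset g K \<union> h ` {1..i}) \<le> rho Z (h (Suc i)) (Gset g i)"
    proof (cases "h (Suc i) \<in> Gset g K \<union> h ` {1..i}")
      case True
      then show ?thesis using im rho_nonneg[OF GN oN] by (simp add: insert_absorb)
    next
      case nin: False
      have "Gset g i \<subseteq> Gset g K \<union> h ` {1..i}" using Gset_mono[of i K] Suc.prems by auto
      then have "rho Z (h (Suc i)) (Gset g K \<union> h ` {1..i}) \<le> rho Z (h (Suc i)) (Gset g i)"
        using rho_sub VN oN nin by blast
      then show ?thesis using im by (simp add: rho_def)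
    qed
    show ?thesis using IH inc e by simp
  qed
qed

lemma before_i0:
  assumes j: "j \<in> {1..K}" and x: "x \<in> perp N M (Gset g (j-1))" and xG: "x \<notin> Gset g K"
  shows "j \<in> {1..<i_zero N M K g}"
proof (cases "\<exists>i\<in>{1..K}. card (perp N M (Gset g (i - 1))) = K - i + 1")
  case False
  then show ?thesis using j by (simp add: i_zero_def)
next
  case True
  define i0 where "i0 = (LEAST i. i \<in> {1..K} \<and> card (perp N M (Gset g (i - 1))) = K - i + 1)"
  have iz: "i_zero N M K g = i0" using True unfolding i_zero_def i0_def by simp
  have i0: "i0 \<in> {1..K}" "card (perp N M (Gset g (i0 - 1))) = K - i0 + 1"
  proof -
    have "\<exists>i. i \<in> {1..K} \<and> card (perp N M (Gset g (i - 1))) = K - i + 1" using True by blast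
    then have "i0 \<in> {1..K} \<and> card (perp N M (Gset g (i0 - 1))) = K - i0 + 1"
      unfolding i0_def by (rule LeastI_ex)
    then show "i0 \<in> {1..K}" "card (perp N M (Gset g (i0 - 1))) = K - i0 + 1" by auto
  qed
  show ?thesis
  proof (rule ccontr)
    assume "j \<notin> {1..<i_zero N M K g}"
    then have ji: "i0 \<le> j" using j iz by auto
    define S where "S = Gset g (i0 - 1)"
    have SG: "S \<subseteq> Gset g K" unfolding S_def using i0(1) by (intro Gset_mono) auto
    have GM: "Gset g K \<in> M" using G_in_M by simp
    have sub1: "Gset g K - S \<subseteq> perp N M S"
    proof
      fix y assume y: "y \<in> Gset g K - S"
      have "S \<union> {y} \<subseteq> Gset g K" using y SG by auto
      then have "S \<union> {y} \<in> M" using down GM by blast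
      then show "y \<in> perp N M S" using y G_sub_N[of K] unfolding perp_def by auto
    qed
    have fp: "finite (perp N M S)" using finN unfolding perp_def by auto
    have "card (Gset g K - S) = K - (i0 - 1)"
      using card_Diff_subset[OF _ SG] SG card_G[of K] card_G[of "i0-1"] i0(1) unfolding S_def
      by (metis finite_subset G_sub_N finN le_refl diff_le_self le_trans atLeastAtMost_iff)
    then have "card (Gset g K - S) = card (perp N M S)" using i0 unfolding S_def by (simp add: Suc_diff_le)
    then have eq: "Gset g K - S = perp N M S" using card_subset_eq[OF fp sub1] by simp
    have S2: "S \<subseteq> Gset g (j-1)" unfolding S_def using ji by (intro Gset_mono) auto
    have "x \<in> perp N M S"
    proof -
      have "Gset g (j-1) \<union> {x} \<in> M" "x \<in> N" "x \<notin> Gset g (j-1)" using x by (auto simp: perp_def)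
      moreover have "S \<union> {x} \<subseteq> Gset g (j-1) \<union> {x}" using S2 by auto
      ultimately show ?thesis using S2 down unfolding perp_def by blast
    qed
    then show False using eq xG by auto
  qed
qed

lemma disc_bound:
  assumes j: "j \<in> {1..K}" and x: "x \<in> perp N M (Gset g (j-1))" and xg: "x \<noteq> g j"
    and D: "inverse (discriminant N M Z g j) \<le> ereal D"
  shows "0 \<le> D \<and> rho Z x (Gset g (j-1)) \<le> D * r j"
proof -
  define S where "S = Gset g (j-1)"
  define Q where "Q = {rho Z g' S | g'. g' \<in> perp N M S \<and> g' \<noteq> g j}"
  define m where "m = Max Q"
  have fp: "finite (perp N M S)" using finN unfolding perp_def by auto
  have "Q \<subseteq> (\<lambda>g'. rho Z g' S) ` perp N M S" unfolding Q_def by auto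
  then have fQ: "finite Q" using fp finite_subset by blast
  have xQ: "rho Z x S \<in> Q" unfolding Q_def S_def using x xg by auto
  have SN: "S \<subseteq> N" unfolding S_def using j by (intro G_sub_N) auto
  have xN: "x \<in> N" using x by (simp add: perp_def)
  have m1: "rho Z x S \<le> m" unfolding m_def using fQ xQ by simp
  have m0: "0 \<le> rho Z x S" using rho_nonneg[OF SN xN] .
  have m2: "m \<le> r j" unfolding m_def r_def
    using fQ xQ step_max[OF j] unfolding Q_def S_def by (subst Max_le_iff) auto
  have d: "discriminant N M Z g j = (if m = 0 then \<infinity> else ereal (r j / m))"
    unfolding discriminant_def m_def Q_def S_def r_def Let_def by simp
  show ?thesis
  proof (cases "m = 0")
    case True
    then have "0 \<le> D" using D d by simp
    moreover have "0 \<le> D * r j" using \<open>0 \<le> D\<close> r_nonneg[OF j] by simp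
    ultimately show ?thesis using True m1 unfolding S_def by linarith
  next
    case False
    then have mp: "m > 0" using m0 m1 by simp
    then have rp: "r j > 0" using m2 by simp
    have "ereal (inverse (r j / m)) \<le> ereal D" using D d False rp by simp
    then have "m / r j \<le> D" by simp
    then have "m \<le> D * r j" using rp by (simp add: divide_le_eq)
    moreover have "0 \<le> D" using \<open>m / r j \<le> D\<close> mp rp by (meson divide_nonneg_pos less_imp_le order_trans)
    ultimately show ?thesis using m1 unfolding S_def by simp
  qed
qed

end


lemma ereal_inv_not_minf: "inverse (x::ereal) \<noteq> -\<infinity>"
  by (cases x) auto

theorem theorem3:
  fixes N :: "'a set" and M :: "'a set set" and Z :: "'a set \<Rightarrow> real"
    and K :: nat and \<Omega> :: "'a set" and g :: "nat \<Rightarrow> 'a"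
  assumes "matroid N M"
    and "K = matroid_rank M" and "K \<ge> 1"
    and "monotone_fn N Z" and "submodular_fn N Z" and "Z {} = 0"
    and "\<Omega> \<in> M" and "card \<Omega> = K" and "\<forall>S\<in>M. Z S \<le> Z \<Omega>" and "Z \<Omega> > 0"
    and "greedy_run N M Z K g"
  shows "ereal (Z (Gset g K) / Z \<Omega>) \<ge>
           min 1 (inverse (ereal (curvature N Z) + max_inv_disc N M Z K g))"
proof -
  interpret gr N M Z K g using assms by unfold_locales auto
  have ON: "\<Omega> \<subseteq> N" using MPow assms(7) by simp
  have fO: "finite \<Omega>" using ON finN finite_subset by blast
  have ex: "\<exists>j\<in>N. rho Z j {} > 0"
  proof (rule ccontr)
    assume "\<not> ?thesis"
    then have "Z \<Omega> \<le> 0" using nopos_le0[OF _ fO ON] by (simp add: not_less)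
    then show False using assms(10) by simp
  qed
  obtain h where h: "h ` {1..K} = \<Omega>" "\<forall>j\<in>{1..K}. (g j \<in> \<Omega> \<longrightarrow> h j = g j)
          \<and> (g j \<notin> \<Omega> \<longrightarrow> h j \<in> perp N M (Gset g (j-1)))"
    using order_ex[OF ON, of K \<Omega>] assms(7,8) fO by auto
  define G where "G = Gset g K"
  define I where "I = {j\<in>{1..K}. g j \<notin> \<Omega>}"
  define J where "J = {j\<in>{1..K}. h j \<notin> G}"
  define A where "A = (\<Sum>j\<in>I. r j)"
  define c where "c = curvature N Z"
  have gG: "j \<in> {1..K} \<Longrightarrow> g j \<in> G" for j unfolding G_def Gset_def by auto
  have hp: "\<forall>j\<in>{1..K}. h j \<in> Gset g K \<or> h j \<in> perp N M (Gset g (j-1))"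
    using h(2) gG unfolding G_def by metis
  have L: "Z (\<Omega> \<union> G) \<ge> Z \<Omega> + (1 - c) * A"
    using lower[OF ON ex, of K] unfolding A_def I_def c_def G_def by simp
  have U: "Z (G \<union> \<Omega>) \<le> Z G + (\<Sum>j\<in>J. rho Z (h j) (Gset g (j-1)))"
    using upper[OF hp, of K] h(1) unfolding J_def G_def by simp
  have key: "Z \<Omega> + (1 - c) * A \<le> Z G + (\<Sum>j\<in>J. rho Z (h j) (Gset g (j-1)))"
    using L U by (simp add: Un_commute)
  have JI: "J \<subseteq> I" unfolding J_def I_def using h(2) gG by auto
  have Jp: "j \<in> J \<Longrightarrow> h j \<in> perp N M (Gset g (j-1)) \<and> h j \<noteq> g j \<and> j \<in> {1..K} \<and> h j \<notin> G" for j
    unfolding J_def using h(2) gG by auto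
  have A0: "A \<ge> 0" unfolding A_def I_def by (rule sum_nonneg) (use r_nonneg in auto)
  have AG: "A \<le> Z G"
  proof -
    have "A \<le> (\<Sum>j\<in>{1..K}. r j)" unfolding A_def I_def
      by (rule sum_mono2) (auto simp: r_nonneg)
    then show ?thesis using telescope[of K] unfolding G_def by simp
  qed
  have c1: "1 - c \<ge> 0" using curv(1)[OF ex] unfolding c_def .
  show ?thesis
  proof (cases "Z \<Omega> \<le> Z G")
    case True
    then have "1 \<le> Z G / Z \<Omega>" using assms(10) by simp
    then have "(1::ereal) \<le> ereal (Z G / Z \<Omega>)" by simp
    then show ?thesis unfolding G_def by (meson min.coboundedI1)
  next
    case False
    have "J \<noteq> {}"
    proof
      assume "J = {}"
      then have "Z \<Omega> + (1 - c) * A \<le> Z G" using key by simp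
      moreover have "(1 - c) * A \<ge> 0" using c1 A0 by simp
      ultimately show False using False by simp
    qed
    then obtain j0 where j0: "j0 \<in> J" by auto
    have bi: "j \<in> {1..<i_zero N M K g}" if "j \<in> J" for j
      using before_i0[of j "h j"] Jp[OF that] unfolding G_def by auto
    have Dge: "inverse (discriminant N M Z g j) \<le> max_inv_disc N M Z K g" if "j \<in> J" for j
    proof -
      have "\<not> i_zero N M K g \<le> 1" using bi[OF that] by auto
      then have "max_inv_disc N M Z K g = Max ((\<lambda>i. inverse (discriminant N M Z g i)) ` {1..<i_zero N M K g})"
        unfolding max_inv_disc_def by simp
      then show ?thesis using bi[OF that] by simp
    qed
    show ?thesis
    proof (cases "max_inv_disc N M Z K g")
      case (real Dr)
      have b: "0 \<le> Dr \<and> rho Z (h j) (Gset g (j-1)) \<le> Dr * r j" if "j \<in> J" for j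
        using disc_bound[of j "h j" Dr] Jp[OF that] Dge[OF that] real by auto
      have Dr0: "0 \<le> Dr" using b[OF j0] by simp
      have "(\<Sum>j\<in>J. rho Z (h j) (Gset g (j-1))) \<le> (\<Sum>j\<in>J. Dr * r j)"
        by (rule sum_mono) (use b in auto)
      also have "\<dots> \<le> (\<Sum>j\<in>I. Dr * r j)"
        by (rule sum_mono2) (use JI Dr0 r_nonneg in \<open>auto simp: I_def\<close>)
      also have "\<dots> = Dr * A" unfolding A_def by (simp add: sum_distrib_left)
      finally have "Z \<Omega> \<le> Z G + (c + Dr - 1) * A" using key by (simp add: algebra_simps)
      then have pos: "c + Dr - 1 > 0"
      proof -
        assume a: "Z \<Omega> \<le> Z G + (c + Dr - 1) * A"
        show ?thesis
        proof (rule ccontr)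
          assume "\<not> c + Dr - 1 > 0"
          then have "(c + Dr - 1) * A \<le> 0" using A0 by (simp add: mult_nonpos_nonneg)
          then show False using a False by simp
        qed
      qed
      have "(c + Dr - 1) * A \<le> (c + Dr - 1) * Z G" using AG pos by simp
      then have "Z \<Omega> \<le> (c + Dr) * Z G" using \<open>Z \<Omega> \<le> Z G + (c + Dr - 1) * A\<close> by (simp add: algebra_simps)
      then have "inverse (c + Dr) \<le> Z G / Z \<Omega>" using pos assms(10)
        by (simp add: field_simps)
      then have "inverse (ereal c + ereal Dr) \<le> ereal (Z G / Z \<Omega>)" using pos by simp
      then show ?thesis using real unfolding G_def c_def by (simp add: min.coboundedI2)
    next
      case PInf
      have "0 \<le> Z G" using AG A0 by simp
      then have "0 \<le> ereal (Z G / Z \<Omega>)" using assms(10) by simp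
      then show ?thesis using PInf unfolding G_def by simp
    next
      case MInf
      then show ?thesis using Dge[OF j0] ereal_inv_not_minf by (metis ereal_infty_less_eq(2))
    qed
  qed
qed

end
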